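(* Let $R$ be a commutative Noetherian ring of prime characteristic $p$, let $H$ be a left $R[x,f]$-module, set $G:=H/\Gamma_x(H)$, and let $\widetilde{H}=\bigoplus_{n\in\mathbb{N}_0}H_n$ (with each $H_n=H$) be the graded left $R[x,f]$-module in which $x$ maps $h\in H_n$ to $xh\in H_{n+1}$. Then: (i) $\mathcal{G}(\widetilde{H})=\mathcal{G}(H)$; (ii) $\operatorname{HSL}(\widetilde{H})=\operatorname{HSL}(H)$ and $\Gamma_x(\widetilde{H})=\bigoplus_{n\in\mathbb{N}_0}\Gamma_x(H_n)=\widetilde{\Gamma_x(H)}$; (iii) there is an $R[x,f]$-isomorphism $\widetilde{H}/\Gamma_x(\widetilde{H})\cong\bigoplus_{n\in\mathbb{N}_0}H_n/\Gamma_x(H_n)=\widetilde{G}$.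
   Context: $R[x,f]$ denotes the Frobenius skew polynomial ring over $R$: as a left $R$-module it is free on $(x^i)_{i\in\mathbb{N}_0}$, with multiplication subject to $xr = r^px$; it is graded with $n$th component $Rx^n$. For a left $R[x,f]$-module $M$: $\operatorname{grann}_{R[x,f]}M$ is the largest graded two-sided ideal annihilating $M$; $\mathcal{G}(M)$ is the set of graded annihilators of all $R[x,f]$-submodules of $M$; $\Gamma_x(M)=\{m: x^jm=0\text{ for some }j\in\mathbb{N}\}$; $\operatorname{HSL}(M)$ is the least $e\in\mathbb{N}_0$ with $x^e\Gamma_x(M)=0$ ($\infty$ if none exists). For a left $R[x,f]$-module $N$, $\widetilde{N}$ denotes the analogous graded module $\bigoplus_{n\in\mathbb{N}_0}N$. *)

theory Defs
  imports Main "HOL-Library.Extended_Nat" "HOL-Computational_Algebra.Primes"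
begin

definition is_ideal :: "'r::comm_ring_1 set \<Rightarrow> bool" where
  "is_ideal I \<longleftrightarrow> 0 \<in> I \<and> (\<forall>a\<in>I. \<forall>b\<in>I. a + b \<in> I) \<and> (\<forall>r. \<forall>a\<in>I. r * a \<in> I)"

definition noetherian_ring :: "'r::comm_ring_1 itself \<Rightarrow> bool" where
  "noetherian_ring T \<longleftrightarrow>
     (\<forall>I :: nat \<Rightarrow> 'r set. (\<forall>n. is_ideal (I n)) \<and> (\<forall>n. I n \<subseteq> I (Suc n))
        \<longrightarrow> (\<exists>N. \<forall>n\<ge>N. I n = I N))"

text \<open>A left R[x,f]-module is an R-module M together with the additive action of x
  satisfying x (r m) = r^p (x m).  We represent it explicitly by a carrier set and operations.\<close>

record ('r, 'm) fmod =
  mcarrier :: "'m set"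
  madd :: "'m \<Rightarrow> 'm \<Rightarrow> 'm"
  mzero :: 'm
  mneg :: "'m \<Rightarrow> 'm"
  msmul :: "'r \<Rightarrow> 'm \<Rightarrow> 'm"
  mx :: "'m \<Rightarrow> 'm"

definition fmodule :: "nat \<Rightarrow> ('r::comm_ring_1, 'm, 'z) fmod_scheme \<Rightarrow> bool" where
  "fmodule p M \<longleftrightarrow>
     mzero M \<in> mcarrier M \<and>
     (\<forall>a\<in>mcarrier M. \<forall>b\<in>mcarrier M. madd M a b \<in> mcarrier M) \<and>
     (\<forall>a\<in>mcarrier M. mneg M a \<in> mcarrier M) \<and>
     (\<forall>r. \<forall>a\<in>mcarrier M. msmul M r a \<in> mcarrier M) \<and>
     (\<forall>a\<in>mcarrier M. mx M a \<in> mcarrier M) \<and>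
     (\<forall>a\<in>mcarrier M. \<forall>b\<in>mcarrier M. \<forall>c\<in>mcarrier M.
        madd M (madd M a b) c = madd M a (madd M b c)) \<and>
     (\<forall>a\<in>mcarrier M. \<forall>b\<in>mcarrier M. madd M a b = madd M b a) \<and>
     (\<forall>a\<in>mcarrier M. madd M (mzero M) a = a) \<and>
     (\<forall>a\<in>mcarrier M. madd M (mneg M a) a = mzero M) \<and>
     (\<forall>r. \<forall>a\<in>mcarrier M. \<forall>b\<in>mcarrier M. msmul M r (madd M a b) = madd M (msmul M r a) (msmul M r b)) \<and>
     (\<forall>r s. \<forall>a\<in>mcarrier M. msmul M (r + s) a = madd M (msmul M r a) (msmul M s a)) \<and>
     (\<forall>r s. \<forall>a\<in>mcarrier M. msmul M (r * s) a = msmul M r (msmul M s a)) \<and>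
     (\<forall>a\<in>mcarrier M. msmul M 1 a = a) \<and>
     (\<forall>a\<in>mcarrier M. \<forall>b\<in>mcarrier M. mx M (madd M a b) = madd M (mx M a) (mx M b)) \<and>
     (\<forall>r. \<forall>a\<in>mcarrier M. mx M (msmul M r a) = msmul M (r ^ p) (mx M a))"

definition fsubmodule :: "('r, 'm, 'z) fmod_scheme \<Rightarrow> 'm set \<Rightarrow> bool" where
  "fsubmodule M N \<longleftrightarrow> N \<subseteq> mcarrier M \<and> mzero M \<in> N \<and>
     (\<forall>a\<in>N. \<forall>b\<in>N. madd M a b \<in> N) \<and> (\<forall>a\<in>N. mneg M a \<in> N) \<and>
     (\<forall>r. \<forall>a\<in>N. msmul M r a \<in> N) \<and> (\<forall>a\<in>N. mx M a \<in> N)"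

text \<open>A graded two-sided ideal of R[x,f] is \<Oplus>_n I_n x^n, represented by the sequence (I_n):
  each I_n is an ideal of R, and closure under left and right multiplication by x
  means a^p \<in> I_(n+1) and a \<in> I_(n+1) for a \<in> I_n (right multiplication by r \<in> R
  is automatic since a x^n r = a r^(p^n) x^n).\<close>
definition graded_two_sided_ideal :: "nat \<Rightarrow> (nat \<Rightarrow> 'r::comm_ring_1 set) \<Rightarrow> bool" where
  "graded_two_sided_ideal p I \<longleftrightarrow> (\<forall>n. is_ideal (I n)) \<and>
     (\<forall>n. \<forall>a\<in>I n. a ^ p \<in> I (Suc n) \<and> a \<in> I (Suc n))"

text \<open>The homogeneous element a x^n acts on m as a (x^n m).\<close>
definition annihilates :: "('r::comm_ring_1, 'm, 'z) fmod_scheme \<Rightarrow> (nat \<Rightarrow> 'r set) \<Rightarrow> bool" where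
  "annihilates M I \<longleftrightarrow>
     (\<forall>n. \<forall>a\<in>I n. \<forall>m\<in>mcarrier M. msmul M a ((mx M ^^ n) m) = mzero M)"

definition grann :: "nat \<Rightarrow> ('r::comm_ring_1, 'm, 'z) fmod_scheme \<Rightarrow> nat \<Rightarrow> 'r set" where
  "grann p M = (GREATEST I. graded_two_sided_ideal p I \<and> annihilates M I)"

definition gann_set :: "nat \<Rightarrow> ('r::comm_ring_1, 'm, 'z) fmod_scheme \<Rightarrow> (nat \<Rightarrow> 'r set) set" where
  "gann_set p M = {grann p (M\<lparr>mcarrier := N\<rparr>) | N. fsubmodule M N}"

definition Gamma_x :: "('r, 'm, 'z) fmod_scheme \<Rightarrow> 'm set" where
  "Gamma_x M = {m \<in> mcarrier M. \<exists>j. (mx M ^^ j) m = mzero M}"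

definition HSL :: "('r, 'm, 'z) fmod_scheme \<Rightarrow> enat" where
  "HSL M = (if \<exists>e. \<forall>m\<in>Gamma_x M. (mx M ^^ e) m = mzero M
            then enat (LEAST e. \<forall>m\<in>Gamma_x M. (mx M ^^ e) m = mzero M) else \<infinity>)"

definition tilde :: "('r, 'm, 'z) fmod_scheme \<Rightarrow> ('r, nat \<Rightarrow> 'm) fmod" where
  "tilde M = \<lparr> mcarrier = {h. (\<forall>n. h n \<in> mcarrier M) \<and> finite {n. h n \<noteq> mzero M}},
               madd = (\<lambda>h g n. madd M (h n) (g n)),
               mzero = (\<lambda>n. mzero M),
               mneg = (\<lambda>h n. mneg M (h n)),
               msmul = (\<lambda>r h n. msmul M r (h n)),
               mx = (\<lambda>h n. case n of 0 \<Rightarrow> mzero M | Suc k \<Rightarrow> mx M (h k)) \<rparr>"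

definition coset :: "('r, 'm, 'z) fmod_scheme \<Rightarrow> 'm set \<Rightarrow> 'm \<Rightarrow> 'm set" where
  "coset M N a = {madd M a n | n. n \<in> N}"

definition quot :: "('r, 'm, 'z) fmod_scheme \<Rightarrow> 'm set \<Rightarrow> ('r, 'm set) fmod" where
  "quot M N = \<lparr> mcarrier = coset M N ` mcarrier M,
               madd = (\<lambda>A B. {madd M a b | a b. a \<in> A \<and> b \<in> B}),
               mzero = N,
               mneg = (\<lambda>A. mneg M ` A),
               msmul = (\<lambda>r A. \<Union>a\<in>A. coset M N (msmul M r a)),
               mx = (\<lambda>A. \<Union>a\<in>A. coset M N (mx M a)) \<rparr>"

definition fmod_iso :: "('r, 'a, 'z1) fmod_scheme \<Rightarrow> ('r, 'b, 'z2) fmod_scheme \<Rightarrow> ('a \<Rightarrow> 'b) \<Rightarrow> bool" where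
  "fmod_iso M N \<phi> \<longleftrightarrow> bij_betw \<phi> (mcarrier M) (mcarrier N) \<and>
     (\<forall>a\<in>mcarrier M. \<forall>b\<in>mcarrier M. \<phi> (madd M a b) = madd N (\<phi> a) (\<phi> b)) \<and>
     (\<forall>r. \<forall>a\<in>mcarrier M. \<phi> (msmul M r a) = msmul N r (\<phi> a)) \<and>
     (\<forall>a\<in>mcarrier M. \<phi> (mx M a) = mx N (\<phi> a))"

end

theory Submission
  imports Defs
begin

definition fann :: "('r::comm_ring_1,'m,'z) fmod_scheme \<Rightarrow> nat \<Rightarrow> 'r set" where
  "fann M n = {a. \<forall>m\<in>mcarrier M. msmul M a ((mx M ^^ n) m) = mzero M}"

locale fm =
  fixes p :: nat and M :: "('r::comm_ring_1,'m,'z) fmod_scheme"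
  assumes fmod: "fmodule p M"
begin

lemma zero_c[simp]: "mzero M \<in> mcarrier M" using fmod unfolding fmodule_def by meson
lemma add_c[simp]: "a \<in> mcarrier M \<Longrightarrow> b \<in> mcarrier M \<Longrightarrow> madd M a b \<in> mcarrier M" using fmod unfolding fmodule_def by meson
lemma neg_c[simp]: "a \<in> mcarrier M \<Longrightarrow> mneg M a \<in> mcarrier M" using fmod unfolding fmodule_def by meson
lemma smul_c[simp]: "a \<in> mcarrier M \<Longrightarrow> msmul M r a \<in> mcarrier M" using fmod unfolding fmodule_def by meson
lemma x_c[simp]: "a \<in> mcarrier M \<Longrightarrow> mx M a \<in> mcarrier M" using fmod unfolding fmodule_def by meson
lemma assoc: "a \<in> mcarrier M \<Longrightarrow> b \<in> mcarrier M \<Longrightarrow> c \<in> mcarrier M \<Longrightarrow> madd M (madd M a b) c = madd M a (madd M b c)" using fmod unfolding fmodule_def by meson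
lemma comm: "a \<in> mcarrier M \<Longrightarrow> b \<in> mcarrier M \<Longrightarrow> madd M a b = madd M b a" using fmod unfolding fmodule_def by meson
lemma lzero[simp]: "a \<in> mcarrier M \<Longrightarrow> madd M (mzero M) a = a" using fmod unfolding fmodule_def by meson
lemma lneg[simp]: "a \<in> mcarrier M \<Longrightarrow> madd M (mneg M a) a = mzero M" using fmod unfolding fmodule_def by meson
lemma smul_add: "a \<in> mcarrier M \<Longrightarrow> b \<in> mcarrier M \<Longrightarrow> msmul M r (madd M a b) = madd M (msmul M r a) (msmul M r b)" using fmod unfolding fmodule_def by meson
lemma add_smul: "a \<in> mcarrier M \<Longrightarrow> msmul M (r + s) a = madd M (msmul M r a) (msmul M s a)" using fmod unfolding fmodule_def by meson
lemma mul_smul: "a \<in> mcarrier M \<Longrightarrow> msmul M (r * s) a = msmul M r (msmul M s a)" using fmod unfolding fmodule_def by meson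
lemma one_smul[simp]: "a \<in> mcarrier M \<Longrightarrow> msmul M 1 a = a" using fmod unfolding fmodule_def by meson
lemma x_add: "a \<in> mcarrier M \<Longrightarrow> b \<in> mcarrier M \<Longrightarrow> mx M (madd M a b) = madd M (mx M a) (mx M b)" using fmod unfolding fmodule_def by meson
lemma x_smul: "a \<in> mcarrier M \<Longrightarrow> mx M (msmul M r a) = msmul M (r ^ p) (mx M a)" using fmod unfolding fmodule_def by meson

lemma rzero[simp]: "a \<in> mcarrier M \<Longrightarrow> madd M a (mzero M) = a" using comm by (metis lzero zero_c)
lemma rneg[simp]: "a \<in> mcarrier M \<Longrightarrow> madd M a (mneg M a) = mzero M" using comm by (metis lneg neg_c)
lemma cancel: assumes "a \<in> mcarrier M" "b \<in> mcarrier M" "c \<in> mcarrier M" "madd M a b = madd M a c" shows "b = c"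
proof -
  have "b = madd M (madd M (mneg M a) a) b" using assms by simp
  also have "\<dots> = madd M (mneg M a) (madd M a b)" using assms by (intro assoc) auto
  also have "\<dots> = madd M (madd M (mneg M a) a) c" using assms by (simp only: assms(4)) (intro assoc[symmetric], auto)
  finally show ?thesis using assms by simp
qed
lemma idem_zero: assumes "a \<in> mcarrier M" "madd M a a = a" shows "a = mzero M"
  using cancel[of a a "mzero M"] assms by simp
lemma smul_zero[simp]: "msmul M r (mzero M) = mzero M"
  by (rule idem_zero) (simp_all add: smul_add[symmetric])
lemma zero_smul[simp]: "a \<in> mcarrier M \<Longrightarrow> msmul M 0 a = mzero M"
  by (rule idem_zero) (simp_all add: add_smul[symmetric])
lemma x_zero[simp]: "mx M (mzero M) = mzero M"
  by (rule idem_zero) (simp_all add: x_add[symmetric])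
lemma neg_unique: assumes "a \<in> mcarrier M" "b \<in> mcarrier M" "madd M b a = mzero M" shows "b = mneg M a"
  using cancel[of a b "mneg M a"] assms by (simp add: comm)
lemma neg_zero[simp]: "mneg M (mzero M) = mzero M"
  using neg_unique[of "mzero M" "mzero M"] by simp
lemma x_neg: "a \<in> mcarrier M \<Longrightarrow> mx M (mneg M a) = mneg M (mx M a)"
  by (rule neg_unique) (simp_all add: x_add[symmetric])
lemma smul_neg: "a \<in> mcarrier M \<Longrightarrow> msmul M r (mneg M a) = mneg M (msmul M r a)"
  by (rule neg_unique) (simp_all add: smul_add[symmetric])

lemma lcancel1[simp]: "a \<in> mcarrier M \<Longrightarrow> b \<in> mcarrier M \<Longrightarrow> madd M (mneg M a) (madd M a b) = b"
  by (simp add: assoc[symmetric])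
lemma lcancel2[simp]: "a \<in> mcarrier M \<Longrightarrow> b \<in> mcarrier M \<Longrightarrow> madd M a (madd M (mneg M a) b) = b"
  by (simp add: assoc[symmetric])

lemma xn_c[simp]: "a \<in> mcarrier M \<Longrightarrow> (mx M ^^ n) a \<in> mcarrier M"
  by (induction n) auto
lemma xn_zero[simp]: "(mx M ^^ n) (mzero M) = mzero M"
  by (induction n) auto
lemma xn_add: "a \<in> mcarrier M \<Longrightarrow> b \<in> mcarrier M \<Longrightarrow> (mx M ^^ n) (madd M a b) = madd M ((mx M ^^ n) a) ((mx M ^^ n) b)"
  by (induction n) (auto simp: x_add)
lemma xn_neg: "a \<in> mcarrier M \<Longrightarrow> (mx M ^^ n) (mneg M a) = mneg M ((mx M ^^ n) a)"
  by (induction n) (auto simp: x_neg)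
lemma xn_smul: "a \<in> mcarrier M \<Longrightarrow> (mx M ^^ n) (msmul M r a) = msmul M (r ^ (p ^ n)) ((mx M ^^ n) a)"
  by (induction n) (auto simp: x_smul power_mult[symmetric] mult.commute)
lemma xn_mono: assumes "a \<in> mcarrier M" "(mx M ^^ i) a = mzero M" "i \<le> j" shows "(mx M ^^ j) a = mzero M"
proof -
  have "j = (j - i) + i" using assms by simp
  then have "(mx M ^^ j) a = (mx M ^^ (j - i)) ((mx M ^^ i) a)" by (metis comp_apply funpow_add)
  then show ?thesis using assms by simp
qed

lemma smul_comm: "a \<in> mcarrier M \<Longrightarrow> msmul M r (msmul M s a) = msmul M s (msmul M r a)"
  by (metis mul_smul mult.commute)

lemma fann_mono: "a \<in> fann M n \<Longrightarrow> a \<in> fann M (Suc n)"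
  unfolding fann_def by (simp add: funpow_Suc_right del: funpow.simps)

lemma fann_graded: "graded_two_sided_ideal p (fann M)"
  unfolding graded_two_sided_ideal_def is_ideal_def
proof (intro conjI allI ballI)
  fix n show "0 \<in> fann M n" by (simp add: fann_def)
next
  fix n a b assume "a \<in> fann M n" "b \<in> fann M n"
  then show "a + b \<in> fann M n" by (simp add: fann_def add_smul)
next
  fix n r a assume "a \<in> fann M n"
  then show "r * a \<in> fann M n" by (simp add: fann_def mul_smul)
next
  fix n a assume a: "a \<in> fann M n"
  show "a \<in> fann M (Suc n)" using fann_mono[OF a] .
  show "a ^ p \<in> fann M (Suc n)" using a by (simp add: fann_def x_smul[symmetric])
qed

lemma grann_eq: "grann p M = fann M"
  unfolding grann_def
proof (rule Greatest_equality)
  show "graded_two_sided_ideal p (fann M) \<and> annihilates M (fann M)"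
    using fann_graded by (simp add: annihilates_def fann_def)
next
  fix I assume "graded_two_sided_ideal p I \<and> annihilates M I"
  then show "I \<le> fann M" by (auto simp: le_fun_def annihilates_def fann_def)
qed

lemma tilde_simps[simp]:
  "mcarrier (tilde M) = {h. (\<forall>n. h n \<in> mcarrier M) \<and> finite {n. h n \<noteq> mzero M}}"
  "madd (tilde M) h g = (\<lambda>n. madd M (h n) (g n))"
  "mzero (tilde M) = (\<lambda>n. mzero M)"
  "mneg (tilde M) h = (\<lambda>n. mneg M (h n))"
  "msmul (tilde M) r h = (\<lambda>n. msmul M r (h n))"
  "mx (tilde M) h = (\<lambda>n. case n of 0 \<Rightarrow> mzero M | Suc k \<Rightarrow> mx M (h k))"
  by (simp_all add: tilde_def)

lemma xT_pow: "(mx (tilde M) ^^ n) h k = (if n \<le> k then (mx M ^^ n) (h (k - n)) else mzero M)"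
proof (induction n arbitrary: k)
  case 0 then show ?case by simp
next
  case (Suc n) then show ?case
    by (cases k) (auto simp del: tilde_simps simp: tilde_simps(6))
qed

lemma fmodule_tilde: "fmodule p (tilde M)"
proof -
  have fin_add: "finite {n. madd M (h n) (g n) \<noteq> mzero M}"
    if "finite {n. h n \<noteq> mzero M}" "finite {n. g n \<noteq> mzero M}" for h g
    by (rule finite_subset[OF _ finite_UnI[OF that]]) auto
  have fin_neg: "finite {n. mneg M (h n) \<noteq> mzero M}" if "finite {n. h n \<noteq> mzero M}" for h
    by (rule finite_subset[OF _ that]) auto
  have fin_smul: "finite {n. msmul M r (h n) \<noteq> mzero M}" if "finite {n. h n \<noteq> mzero M}" for h r
    by (rule finite_subset[OF _ that]) auto
  have fin_x: "finite {n. (case n of 0 \<Rightarrow> mzero M | Suc k \<Rightarrow> mx M (h k)) \<noteq> mzero M}"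
    if "finite {n. h n \<noteq> mzero M}" for h
  proof (rule finite_subset[OF _ finite_imageI[OF that, of Suc]])
    show "{n. (case n of 0 \<Rightarrow> mzero M | Suc k \<Rightarrow> mx M (h k)) \<noteq> mzero M} \<subseteq> Suc ` {n. h n \<noteq> mzero M}"
    proof
      fix n assume "n \<in> {n. (case n of 0 \<Rightarrow> mzero M | Suc k \<Rightarrow> mx M (h k)) \<noteq> mzero M}"
      then show "n \<in> Suc ` {n. h n \<noteq> mzero M}" by (cases n) auto
    qed
  qed
  show ?thesis unfolding fmodule_def
    apply (simp add: fin_add fin_neg fin_smul fin_x)
    apply (intro conjI allI ballI impI)
    apply (auto simp: fun_eq_iff assoc add_smul mul_smul smul_add x_add x_smul split: nat.split intro: comm)
    done
qed

end

context fm begin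

lemma sing_c: "m \<in> mcarrier M \<Longrightarrow> (\<lambda>j. if j = k then m else mzero M) \<in> mcarrier (tilde M)"
  by (auto intro: finite_subset[of _ "{k}"])

lemma fann_tilde: "fann (tilde M) = fann M"
proof (rule ext, rule set_eqI, rule iffI)
  fix n a assume a: "a \<in> fann (tilde M) n"
  show "a \<in> fann M n" unfolding fann_def
  proof (intro CollectI ballI)
    fix m assume m: "m \<in> mcarrier M"
    have "msmul (tilde M) a ((mx (tilde M) ^^ n) (\<lambda>j. if j = 0 then m else mzero M)) = mzero (tilde M)"
      using a sing_c[OF m, of 0] unfolding fann_def by blast
    then have "msmul (tilde M) a ((mx (tilde M) ^^ n) (\<lambda>j. if j = 0 then m else mzero M)) n = mzero (tilde M) n"
      by simp
    then show "msmul M a ((mx M ^^ n) m) = mzero M" by (simp add: xT_pow del: tilde_simps(6))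
  qed
next
  fix n a assume a: "a \<in> fann M n"
  show "a \<in> fann (tilde M) n" unfolding fann_def
  proof (intro CollectI ballI)
    fix h assume h: "h \<in> mcarrier (tilde M)"
    show "msmul (tilde M) a ((mx (tilde M) ^^ n) h) = mzero (tilde M)"
      using a h by (auto simp: fann_def xT_pow fun_eq_iff simp del: tilde_simps(6))
  qed
qed

lemma Gamma_sub: "fsubmodule M (Gamma_x M)"
  unfolding fsubmodule_def Gamma_x_def
proof (intro conjI ballI allI)
  show "mzero M \<in> {m \<in> mcarrier M. \<exists>j. (mx M ^^ j) m = mzero M}" by auto
next
  fix a b assume a: "a \<in> {m \<in> mcarrier M. \<exists>j. (mx M ^^ j) m = mzero M}"
    and b: "b \<in> {m \<in> mcarrier M. \<exists>j. (mx M ^^ j) m = mzero M}"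
  then obtain i j where i: "(mx M ^^ i) a = mzero M" and j: "(mx M ^^ j) b = mzero M" and c: "a \<in> mcarrier M" "b \<in> mcarrier M" by auto
  have "(mx M ^^ (i + j)) a = mzero M" "(mx M ^^ (i + j)) b = mzero M"
    using xn_mono[OF c(1) i] xn_mono[OF c(2) j] by auto
  then have "(mx M ^^ (i + j)) (madd M a b) = mzero M" using c by (simp add: xn_add)
  then show "madd M a b \<in> {m \<in> mcarrier M. \<exists>j. (mx M ^^ j) m = mzero M}"
    using c by (metis (mono_tags, lifting) add_c mem_Collect_eq)
next
  fix a assume "a \<in> {m \<in> mcarrier M. \<exists>j. (mx M ^^ j) m = mzero M}"
  then obtain j where "a \<in> mcarrier M" "(mx M ^^ j) a = mzero M" by auto
  then have "(mx M ^^ j) (mneg M a) = mzero M" by (simp add: xn_neg)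
  then show "mneg M a \<in> {m \<in> mcarrier M. \<exists>j. (mx M ^^ j) m = mzero M}" using \<open>a \<in> mcarrier M\<close> by auto
next
  fix r a assume "a \<in> {m \<in> mcarrier M. \<exists>j. (mx M ^^ j) m = mzero M}"
  then obtain j where "a \<in> mcarrier M" "(mx M ^^ j) a = mzero M" by auto
  then have "(mx M ^^ j) (msmul M r a) = mzero M" by (simp add: xn_smul)
  then show "msmul M r a \<in> {m \<in> mcarrier M. \<exists>j. (mx M ^^ j) m = mzero M}" using \<open>a \<in> mcarrier M\<close> by auto
next
  fix a assume "a \<in> {m \<in> mcarrier M. \<exists>j. (mx M ^^ j) m = mzero M}"
  then obtain j where "a \<in> mcarrier M" "(mx M ^^ j) a = mzero M" by auto
  then have "(mx M ^^ j) (mx M a) = mzero M"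
    by (metis x_zero comp_apply funpow_Suc_right funpow.simps(2))
  then show "mx M a \<in> {m \<in> mcarrier M. \<exists>j. (mx M ^^ j) m = mzero M}" using \<open>a \<in> mcarrier M\<close> by auto
qed (auto simp: Gamma_x_def)

lemma Gamma_tilde: "Gamma_x (tilde M) = {h. (\<forall>n. h n \<in> Gamma_x M) \<and> finite {n. h n \<noteq> mzero M}}"
proof (rule set_eqI, rule iffI)
  fix h assume "h \<in> Gamma_x (tilde M)"
  then obtain j where h: "h \<in> mcarrier (tilde M)" "(mx (tilde M) ^^ j) h = mzero (tilde M)"
    unfolding Gamma_x_def by blast
  have "(mx M ^^ j) (h n) = mzero M" for n
  proof -
    have "(mx (tilde M) ^^ j) h (n + j) = mzero M" using h(2) by simp
    then show ?thesis by (simp add: xT_pow del: tilde_simps(6))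
  qed
  then show "h \<in> {h. (\<forall>n. h n \<in> Gamma_x M) \<and> finite {n. h n \<noteq> mzero M}}"
    using h(1) by (auto simp: Gamma_x_def)
next
  fix h :: "nat \<Rightarrow> 'm" assume h: "h \<in> {h. (\<forall>n. h n \<in> Gamma_x M) \<and> finite {n. h n \<noteq> mzero M}}"
  define S where "S = {n. h n \<noteq> mzero M}"
  define J where "J n = (SOME j. (mx M ^^ j) (h n) = mzero M)" for n
  have hc: "h n \<in> mcarrier M" for n using h by (auto simp: Gamma_x_def)
  have J: "(mx M ^^ J n) (h n) = mzero M" for n
    unfolding J_def by (rule someI_ex) (use h in \<open>auto simp: Gamma_x_def\<close>)
  define j where "j = (\<Sum>n\<in>S. J n)"
  have fin: "finite S" using h S_def by auto
  have z: "(mx M ^^ j) (h n) = mzero M" for n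
  proof (cases "n \<in> S")
    case True
    then have "J n \<le> j" unfolding j_def using fin by (intro member_le_sum) auto
    then show ?thesis using xn_mono[OF hc J] by blast
  next
    case False then show ?thesis by (simp add: S_def)
  qed
  have "(mx (tilde M) ^^ j) h = mzero (tilde M)"
    using z by (simp add: xT_pow fun_eq_iff del: tilde_simps(6))
  moreover have "h \<in> mcarrier (tilde M)" using h hc by auto
  ultimately show "h \<in> Gamma_x (tilde M)" unfolding Gamma_x_def by blast
qed

end

lemma tilde_restrict: "tilde (M\<lparr>mcarrier := N\<rparr>) = (tilde M)\<lparr>mcarrier := {h. (\<forall>n. h n \<in> N) \<and> finite {n. h n \<noteq> mzero M}}\<rparr>"
  by (simp add: tilde_def fun_eq_iff split: nat.split)

lemma fmodule_restrict:
  assumes "fmodule p M" "fsubmodule M N" shows "fmodule p (M\<lparr>mcarrier := N\<rparr>)"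
proof -
  interpret fm p M by (rule fm.intro, rule assms(1))
  have sub: "N \<subseteq> mcarrier M" using assms(2) by (simp add: fsubmodule_def)
  have "\<And>a. a \<in> N \<Longrightarrow> a \<in> mcarrier M" using sub by blast
  then show ?thesis using assms(2) unfolding fmodule_def fsubmodule_def
    by (auto simp: assoc add_smul mul_smul smul_add x_add x_smul intro: comm)
qed

lemma fsubmodule_from:
  assumes "L \<subseteq> mcarrier M" "fmodule p (M\<lparr>mcarrier := L\<rparr>)" shows "fsubmodule M L"
  using assms unfolding fmodule_def fsubmodule_def by simp

lemma gann_tilde:
  assumes fH: "fmodule p H" shows "gann_set p (tilde H) = gann_set p H"
proof -
  interpret fm p H by (rule fm.intro, rule fH)
  show ?thesis
  proof (rule set_eqI, rule iffI)
    fix I assume "I \<in> gann_set p (tilde H)"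
    then obtain L where L: "fsubmodule (tilde H) L" and I: "I = grann p ((tilde H)\<lparr>mcarrier := L\<rparr>)"
      by (auto simp: gann_set_def)
    have fL: "fmodule p ((tilde H)\<lparr>mcarrier := L\<rparr>)" by (rule fmodule_restrict[OF fmodule_tilde L])
    define A where "A = fann ((tilde H)\<lparr>mcarrier := L\<rparr>)"
    have IA: "I = A" using fm.grann_eq[OF fm.intro[OF fL]] I A_def by simp
    have Amono: "a \<in> A n \<Longrightarrow> a \<in> A (Suc n)" for a n
      using fm.fann_mono[OF fm.intro[OF fL]] A_def by blast
    have A_iff: "a \<in> A n \<longleftrightarrow> (\<forall>h\<in>L. msmul (tilde H) a ((mx (tilde H) ^^ n) h) = mzero (tilde H))" for a n
      by (simp add: A_def fann_def del: tilde_simps)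
    define N where "N = {m \<in> mcarrier H. \<forall>n. \<forall>a\<in>A n. msmul H a ((mx H ^^ n) m) = mzero H}"
    have Lc: "L \<subseteq> mcarrier (tilde H)" using L by (simp add: fsubmodule_def del: tilde_simps)
    have hN: "h j \<in> N" if h: "h \<in> L" for h j
    proof -
      have "h j \<in> mcarrier H" using h Lc by auto
      moreover have "msmul H a ((mx H ^^ n) (h j)) = mzero H" if a: "a \<in> A n" for n a
      proof -
        have "msmul (tilde H) a ((mx (tilde H) ^^ n) h) = mzero (tilde H)" using a h A_iff by blast
        then have "msmul (tilde H) a ((mx (tilde H) ^^ n) h) (j + n) = mzero H" by simp
        then show ?thesis by (simp add: xT_pow del: tilde_simps(6))
      qed
      ultimately show ?thesis unfolding N_def by blast
    qed
    have NS: "fsubmodule H N" unfolding fsubmodule_def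
    proof (intro conjI ballI allI)
      show "N \<subseteq> mcarrier H" by (auto simp: N_def)
      show "mzero H \<in> N" by (auto simp: N_def)
    next
      fix u v assume "u \<in> N" "v \<in> N"
      then show "madd H u v \<in> N" by (auto simp: N_def xn_add smul_add)
    next
      fix u assume "u \<in> N"
      then show "mneg H u \<in> N" by (auto simp: N_def xn_neg smul_neg)
    next
      fix r u assume "u \<in> N"
      then show "msmul H r u \<in> N"
        apply (clarsimp simp: N_def xn_smul)
        apply (subst smul_comm)
         apply simp_all
        done
    next
      fix u assume u: "u \<in> N"
      have "msmul H a ((mx H ^^ n) (mx H u)) = mzero H" if "a \<in> A n" for a n
      proof -
        have "a \<in> A (Suc n)" using Amono that .
        then have "msmul H a ((mx H ^^ Suc n) u) = mzero H" using u unfolding N_def by blast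
        then show ?thesis by (simp add: funpow_Suc_right del: funpow.simps)
      qed
      then show "mx H u \<in> N" using u by (auto simp: N_def)
    qed
    have fN: "fmodule p (H\<lparr>mcarrier := N\<rparr>)" by (rule fmodule_restrict[OF fH NS])
    have "fann (H\<lparr>mcarrier := N\<rparr>) = A"
    proof (rule ext, rule set_eqI, rule iffI)
      fix n a assume a: "a \<in> fann (H\<lparr>mcarrier := N\<rparr>) n"
      show "a \<in> A n" unfolding A_iff
      proof
        fix h assume h: "h \<in> L"
        have "msmul H a ((mx H ^^ n) (h k)) = mzero H" for k
          using a hN[OF h, of k] by (simp add: fann_def)
        then show "msmul (tilde H) a ((mx (tilde H) ^^ n) h) = mzero (tilde H)"
          by (simp add: xT_pow fun_eq_iff del: tilde_simps(6))
      qed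
    next
      fix n a assume "a \<in> A n"
      then show "a \<in> fann (H\<lparr>mcarrier := N\<rparr>) n" by (simp add: fann_def N_def)
    qed
    then have "I = grann p (H\<lparr>mcarrier := N\<rparr>)" using fm.grann_eq[OF fm.intro[OF fN]] IA by simp
    then show "I \<in> gann_set p H" using NS by (auto simp: gann_set_def)
  next
    fix I assume "I \<in> gann_set p H"
    then obtain N where N: "fsubmodule H N" and I: "I = grann p (H\<lparr>mcarrier := N\<rparr>)"
      by (auto simp: gann_set_def)
    have fN: "fmodule p (H\<lparr>mcarrier := N\<rparr>)" by (rule fmodule_restrict[OF fH N])
    interpret K: fm p "H\<lparr>mcarrier := N\<rparr>" by (rule fm.intro, rule fN)
    define L :: "(nat \<Rightarrow> _) set" where "L = {h. (\<forall>n. h n \<in> N) \<and> finite {n. h n \<noteq> mzero H}}"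
    have eq: "tilde (H\<lparr>mcarrier := N\<rparr>) = (tilde H)\<lparr>mcarrier := L\<rparr>"
      unfolding L_def by (rule tilde_restrict)
    have fT: "fmodule p ((tilde H)\<lparr>mcarrier := L\<rparr>)" using K.fmodule_tilde eq by simp
    have Nc: "N \<subseteq> mcarrier H" using N by (simp add: fsubmodule_def)
    have LS: "fsubmodule (tilde H) L"
      by (rule fsubmodule_from[OF _ fT]) (use Nc in \<open>auto simp: L_def\<close>)
    have "grann p ((tilde H)\<lparr>mcarrier := L\<rparr>) = grann p (tilde (H\<lparr>mcarrier := N\<rparr>))" using eq by simp
    also have "\<dots> = fann (tilde (H\<lparr>mcarrier := N\<rparr>))"
      using fm.grann_eq[OF fm.intro[OF K.fmodule_tilde]] .
    also have "\<dots> = fann (H\<lparr>mcarrier := N\<rparr>)" by (rule K.fann_tilde)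
    also have "\<dots> = I" using K.grann_eq I by simp
    finally show "I \<in> gann_set p (tilde H)" using LS by (auto simp: gann_set_def)
  qed
qed

context fm begin

lemma HSL_pred:
  "(\<forall>h\<in>Gamma_x (tilde M). (mx (tilde M) ^^ e) h = mzero (tilde M)) \<longleftrightarrow> (\<forall>m\<in>Gamma_x M. (mx M ^^ e) m = mzero M)"
proof
  assume A: "\<forall>h\<in>Gamma_x (tilde M). (mx (tilde M) ^^ e) h = mzero (tilde M)"
  show "\<forall>m\<in>Gamma_x M. (mx M ^^ e) m = mzero M"
  proof
    fix m assume m: "m \<in> Gamma_x M"
    have z: "mzero M \<in> Gamma_x M" using Gamma_sub by (simp add: fsubmodule_def)
    have "(\<lambda>j. if j = 0 then m else mzero M) \<in> Gamma_x (tilde M)"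
      unfolding Gamma_tilde using m z by (auto intro: finite_subset[of _ "{0}"])
    then have "(mx (tilde M) ^^ e) (\<lambda>j. if j = 0 then m else mzero M) e = mzero M" using A by simp
    then show "(mx M ^^ e) m = mzero M" by (simp add: xT_pow del: tilde_simps(6))
  qed
next
  assume A: "\<forall>m\<in>Gamma_x M. (mx M ^^ e) m = mzero M"
  show "\<forall>h\<in>Gamma_x (tilde M). (mx (tilde M) ^^ e) h = mzero (tilde M)"
    using A unfolding Gamma_tilde by (auto simp: xT_pow fun_eq_iff simp del: tilde_simps(6))
qed

lemma HSL_tilde: "HSL (tilde M) = HSL M"
  unfolding HSL_def HSL_pred ..

end

locale fmsub = fm +
  fixes N assumes sub: "fsubmodule M N"
begin

lemma Nc: "n \<in> N \<Longrightarrow> n \<in> mcarrier M" using sub by (auto simp: fsubmodule_def)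
lemma N_zero[simp]: "mzero M \<in> N" using sub by (auto simp: fsubmodule_def)
lemma N_add: "a \<in> N \<Longrightarrow> b \<in> N \<Longrightarrow> madd M a b \<in> N" using sub by (auto simp: fsubmodule_def)
lemma N_neg: "a \<in> N \<Longrightarrow> mneg M a \<in> N" using sub by (auto simp: fsubmodule_def)
lemma N_smul: "a \<in> N \<Longrightarrow> msmul M r a \<in> N" using sub by (auto simp: fsubmodule_def)
lemma N_x: "a \<in> N \<Longrightarrow> mx M a \<in> N" using sub by (auto simp: fsubmodule_def)

lemma swap4:
  assumes "a \<in> mcarrier M" "b \<in> mcarrier M" "c \<in> mcarrier M" "d \<in> mcarrier M"
  shows "madd M (madd M a b) (madd M c d) = madd M (madd M a c) (madd M b d)"
proof -
  have "madd M (madd M a b) (madd M c d) = madd M a (madd M b (madd M c d))" using assms by (simp add: assoc)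
  also have "madd M b (madd M c d) = madd M (madd M b c) d" using assms by (simp add: assoc)
  also have "madd M b c = madd M c b" using assms(2,3) by (rule comm)
  also have "madd M (madd M c b) d = madd M c (madd M b d)" using assms by (simp add: assoc)
  also have "madd M a (madd M c (madd M b d)) = madd M (madd M a c) (madd M b d)" using assms by (simp add: assoc)
  finally show ?thesis .
qed

lemma coset_shift:
  assumes a: "a \<in> mcarrier M" and n: "n \<in> N" shows "coset M N (madd M a n) = coset M N a"
proof (rule set_eqI, rule iffI)
  fix x assume "x \<in> coset M N (madd M a n)"
  then obtain n' where n': "n' \<in> N" "x = madd M (madd M a n) n'" by (auto simp: coset_def)
  then have "x = madd M a (madd M n n')" using a n by (simp add: assoc Nc)
  then show "x \<in> coset M N a" using n n' by (auto simp: coset_def intro: N_add)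
next
  fix x assume "x \<in> coset M N a"
  then obtain n' where n': "n' \<in> N" "x = madd M a n'" by (auto simp: coset_def)
  have nc: "n \<in> mcarrier M" "n' \<in> mcarrier M" using n n' Nc by auto
  have "madd M (madd M a n) (madd M (mneg M n) n') = madd M a (madd M (madd M n (mneg M n)) n')"
    using a nc by (simp add: assoc)
  also have "\<dots> = x" using nc n' by simp
  finally have "x = madd M (madd M a n) (madd M (mneg M n) n')" ..
  moreover have "madd M (mneg M n) n' \<in> N" by (intro N_add N_neg n n')
  ultimately show "x \<in> coset M N (madd M a n)" unfolding coset_def by blast
qed

lemma coset_mem: "a \<in> mcarrier M \<Longrightarrow> a \<in> coset M N a"
  unfolding coset_def by (rule CollectI, rule exI[of _ "mzero M"]) simp

lemma coset_zero: "coset M N (mzero M) = N"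
proof (rule set_eqI, rule iffI)
  fix x assume "x \<in> coset M N (mzero M)" then show "x \<in> N" unfolding coset_def using Nc by auto
next
  fix x assume x: "x \<in> N"
  then have "x = madd M (mzero M) x" using Nc by simp
  then show "x \<in> coset M N (mzero M)" unfolding coset_def using x by blast
qed

lemma coset_eq_iff:
  assumes a: "a \<in> mcarrier M" and b: "b \<in> mcarrier M"
  shows "coset M N a = coset M N b \<longleftrightarrow> madd M (mneg M b) a \<in> N"
proof
  assume "coset M N a = coset M N b"
  then have "a \<in> coset M N b" using coset_mem[OF a] by simp
  then obtain n where n: "n \<in> N" "a = madd M b n" by (auto simp: coset_def)
  have "madd M (mneg M b) a = madd M (madd M (mneg M b) b) n" using n b Nc by (simp add: assoc)
  then show "madd M (mneg M b) a \<in> N" using n b Nc by simp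
next
  assume n: "madd M (mneg M b) a \<in> N"
  have "madd M b (madd M (mneg M b) a) = madd M (madd M b (mneg M b)) a" using a b by (simp add: assoc)
  then have "madd M b (madd M (mneg M b) a) = a" using a b by simp
  then show "coset M N a = coset M N b" using coset_shift[OF b n] by simp
qed

lemma qadd: assumes a: "a \<in> mcarrier M" and b: "b \<in> mcarrier M"
  shows "madd (quot M N) (coset M N a) (coset M N b) = coset M N (madd M a b)"
proof (rule set_eqI, rule iffI)
  fix x assume "x \<in> madd (quot M N) (coset M N a) (coset M N b)"
  then obtain n1 n2 where n: "n1 \<in> N" "n2 \<in> N" "x = madd M (madd M a n1) (madd M b n2)"
    by (auto simp: quot_def coset_def)
  then have "x = madd M (madd M a b) (madd M n1 n2)" using a b Nc by (simp add: swap4)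
  then show "x \<in> coset M N (madd M a b)" using n by (auto simp: coset_def intro: N_add)
next
  fix x assume "x \<in> coset M N (madd M a b)"
  then obtain n where n: "n \<in> N" "x = madd M (madd M a b) n" by (auto simp: coset_def)
  have "madd M (madd M a n) (madd M b (mzero M)) = madd M (madd M a b) (madd M n (mzero M))"
    using a b n Nc by (intro swap4) auto
  then have "x = madd M (madd M a n) (madd M b (mzero M))" using n Nc b by simp
  then show "x \<in> madd (quot M N) (coset M N a) (coset M N b)"
    unfolding quot_def coset_def fmod.select_convs using n N_zero by blast
qed

lemma qsmul: assumes a: "a \<in> mcarrier M"
  shows "msmul (quot M N) r (coset M N a) = coset M N (msmul M r a)"
proof -
  have "coset M N (msmul M r x) = coset M N (msmul M r a)" if x: "x \<in> coset M N a" for x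
  proof -
    obtain n where n: "n \<in> N" "x = madd M a n" using x by (auto simp: coset_def)
    then show ?thesis using a Nc by (simp add: smul_add coset_shift N_smul)
  qed
  note eq = this
  have "msmul (quot M N) r (coset M N a) = (\<Union>x\<in>coset M N a. coset M N (msmul M r x))" by (simp add: quot_def)
  also have "\<dots> = (\<Union>x\<in>coset M N a. coset M N (msmul M r a))" by (rule SUP_cong) (simp_all add: eq)
  also have "\<dots> = coset M N (msmul M r a)" using coset_mem[OF a] by auto
  finally show ?thesis .
qed

lemma qx: assumes a: "a \<in> mcarrier M"
  shows "mx (quot M N) (coset M N a) = coset M N (mx M a)"
proof -
  have "coset M N (mx M x) = coset M N (mx M a)" if x: "x \<in> coset M N a" for x
  proof -
    obtain n where n: "n \<in> N" "x = madd M a n" using x by (auto simp: coset_def)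
    then show ?thesis using a Nc by (simp add: x_add coset_shift N_x)
  qed
  note eq = this
  have "mx (quot M N) (coset M N a) = (\<Union>x\<in>coset M N a. coset M N (mx M x))" by (simp add: quot_def)
  also have "\<dots> = (\<Union>x\<in>coset M N a. coset M N (mx M a))" by (rule SUP_cong) (simp_all add: eq)
  also have "\<dots> = coset M N (mx M a)" using coset_mem[OF a] by auto
  finally show ?thesis .
qed

end

lemma tilde_sel:
  "mcarrier (tilde K) = {h. (\<forall>n. h n \<in> mcarrier K) \<and> finite {n. h n \<noteq> mzero K}}"
  "madd (tilde K) h g = (\<lambda>n. madd K (h n) (g n))"
  "msmul (tilde K) r h = (\<lambda>n. msmul K r (h n))"
  "mx (tilde K) h = (\<lambda>n. case n of 0 \<Rightarrow> mzero K | Suc k \<Rightarrow> mx K (h k))"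
  by (simp_all add: tilde_def)

lemma quot_sel: "mcarrier (quot M N) = coset M N ` mcarrier M" "mzero (quot M N) = N"
  by (simp_all add: quot_def)

context fm begin

lemma quot_iso: "\<exists>\<phi>. fmod_iso (quot (tilde M) (Gamma_x (tilde M))) (tilde (quot M (Gamma_x M))) \<phi>"
proof -
  interpret T: fm p "tilde M" by (rule fm.intro, rule fmodule_tilde)
  interpret Q: fmsub p M "Gamma_x M" by (rule fmsub.intro, rule fm_axioms, rule fmsub_axioms.intro, rule Gamma_sub)
  interpret QT: fmsub p "tilde M" "Gamma_x (tilde M)"
    by (rule fmsub.intro, rule T.fm_axioms, rule fmsub_axioms.intro, rule T.Gamma_sub)
  define G where "G = Gamma_x M"
  define GT where "GT = Gamma_x (tilde M)"
  define \<phi> :: "(nat \<Rightarrow> 'm) set \<Rightarrow> nat \<Rightarrow> 'm set" where "\<phi> A = (\<lambda>n. (\<lambda>a. a n) ` A)" for A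
  have zG: "mzero M \<in> G" unfolding G_def by simp
  have key: "\<phi> (coset (tilde M) GT h) = (\<lambda>n. coset M G (h n))" if h: "h \<in> mcarrier (tilde M)" for h
  proof (rule ext, rule set_eqI, rule iffI)
    fix n x assume "x \<in> \<phi> (coset (tilde M) GT h) n"
    then obtain g where g: "g \<in> GT" "x = madd M (h n) (g n)" by (auto simp: \<phi>_def coset_def)
    have "g n \<in> G" using g(1) unfolding GT_def G_def Gamma_tilde by auto
    then show "x \<in> coset M G (h n)" using g by (auto simp: coset_def)
  next
    fix n x assume "x \<in> coset M G (h n)"
    then obtain c where c: "c \<in> G" "x = madd M (h n) c" by (auto simp: coset_def)
    define g where "g = (\<lambda>k. if k = n then c else mzero M)"
    have "g \<in> GT" unfolding GT_def Gamma_tilde using c zG unfolding G_def g_def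
      by (auto intro: finite_subset[of _ "{n}"])
    moreover have "x = madd (tilde M) h g n" using c by (simp add: g_def)
    ultimately show "x \<in> \<phi> (coset (tilde M) GT h) n" unfolding \<phi>_def coset_def by blast
  qed
  have hc: "h n \<in> mcarrier M" if "h \<in> mcarrier (tilde M)" for h n using that by simp
  have inj: "inj_on \<phi> (coset (tilde M) GT ` mcarrier (tilde M))"
  proof (rule inj_onI)
    fix A B assume "A \<in> coset (tilde M) GT ` mcarrier (tilde M)" "B \<in> coset (tilde M) GT ` mcarrier (tilde M)"
      and AB: "\<phi> A = \<phi> B"
    then obtain h g where h: "h \<in> mcarrier (tilde M)" "A = coset (tilde M) GT h"
      and g: "g \<in> mcarrier (tilde M)" "B = coset (tilde M) GT g" by auto
    have "coset M G (h n) = coset M G (g n)" for n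
      using AB key[OF h(1)] key[OF g(1)] h(2) g(2) by metis
    then have dn: "madd M (mneg M (g n)) (h n) \<in> G" for n
      using Q.coset_eq_iff[OF hc[OF h(1)] hc[OF g(1)]] unfolding G_def by blast
    define d where "d = madd (tilde M) (mneg (tilde M) g) h"
    have dc: "d \<in> mcarrier (tilde M)" unfolding d_def using g(1) h(1) by (intro T.add_c T.neg_c)
    have "d \<in> GT" unfolding GT_def Gamma_tilde using dn dc unfolding G_def d_def by simp
    then have "coset (tilde M) GT h = coset (tilde M) GT g"
      using QT.coset_eq_iff[OF h(1) g(1)] unfolding GT_def d_def by blast
    then show "A = B" using h g by simp
  qed
  have img: "\<phi> ` (coset (tilde M) GT ` mcarrier (tilde M)) = mcarrier (tilde (quot M G))"
  proof (rule set_eqI, rule iffI)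
    fix F assume "F \<in> \<phi> ` (coset (tilde M) GT ` mcarrier (tilde M))"
    then obtain h where h: "h \<in> mcarrier (tilde M)" "F = (\<lambda>n. coset M G (h n))" using key by auto
    have "{n. coset M G (h n) \<noteq> G} \<subseteq> {n. h n \<noteq> mzero M}"
      using Q.coset_zero unfolding G_def by auto
    then have "finite {n. coset M G (h n) \<noteq> G}" using h(1) by (auto intro: finite_subset)
    then show "F \<in> mcarrier (tilde (quot M G))" using h by (simp add: tilde_sel quot_sel)
  next
    fix F assume "F \<in> mcarrier (tilde (quot M G))"
    then have F: "\<And>n. F n \<in> coset M G ` mcarrier M" "finite {n. F n \<noteq> G}" by (simp_all add: tilde_sel quot_sel)
    define c where "c n = (if F n = G then mzero M else (SOME x. x \<in> mcarrier M \<and> F n = coset M G x))" for n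
    have c: "c n \<in> mcarrier M \<and> F n = coset M G (c n)" for n
    proof (cases "F n = G")
      case True then show ?thesis using Q.coset_zero unfolding c_def G_def by simp
    next
      case False
      have "\<exists>x. x \<in> mcarrier M \<and> F n = coset M G x" using F(1)[of n] by auto
      from someI_ex[OF this] show ?thesis using False unfolding c_def by simp
    qed
    have "{n. c n \<noteq> mzero M} \<subseteq> {n. F n \<noteq> G}" unfolding c_def by auto
    then have cc: "c \<in> mcarrier (tilde M)" using c F(2) by (auto intro: finite_subset)
    have "F = \<phi> (coset (tilde M) GT c)" using key[OF cc] c by auto
    then show "F \<in> \<phi> ` (coset (tilde M) GT ` mcarrier (tilde M))" using cc by blast
  qed
  have "fmod_iso (quot (tilde M) GT) (tilde (quot M G)) \<phi>"
    unfolding fmod_iso_def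
  proof (intro conjI ballI allI)
    show "bij_betw \<phi> (mcarrier (quot (tilde M) GT)) (mcarrier (tilde (quot M G)))"
      unfolding bij_betw_def quot_sel using inj img by simp
  next
    fix A B assume "A \<in> mcarrier (quot (tilde M) GT)" "B \<in> mcarrier (quot (tilde M) GT)"
    then obtain h g where h: "h \<in> mcarrier (tilde M)" "A = coset (tilde M) GT h"
      and g: "g \<in> mcarrier (tilde M)" "B = coset (tilde M) GT g" by (auto simp: quot_sel)
    have "madd (quot (tilde M) GT) A B = coset (tilde M) GT (madd (tilde M) h g)"
      using QT.qadd[OF h(1) g(1)] h g unfolding GT_def by simp
    then have "\<phi> (madd (quot (tilde M) GT) A B) = (\<lambda>n. coset M G (madd M (h n) (g n)))"
      using key[OF T.add_c[OF h(1) g(1)]] by simp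
    also have "\<dots> = madd (tilde (quot M G)) (\<phi> A) (\<phi> B)"
      using key[OF h(1)] key[OF g(1)] h g Q.qadd[OF hc[OF h(1)] hc[OF g(1)]]
      unfolding G_def by (simp add: tilde_sel)
    finally show "\<phi> (madd (quot (tilde M) GT) A B) = madd (tilde (quot M G)) (\<phi> A) (\<phi> B)" .
  next
    fix r A assume "A \<in> mcarrier (quot (tilde M) GT)"
    then obtain h where h: "h \<in> mcarrier (tilde M)" "A = coset (tilde M) GT h" by (auto simp: quot_sel)
    have "msmul (quot (tilde M) GT) r A = coset (tilde M) GT (msmul (tilde M) r h)"
      using QT.qsmul[OF h(1)] h unfolding GT_def by simp
    then have "\<phi> (msmul (quot (tilde M) GT) r A) = (\<lambda>n. coset M G (msmul M r (h n)))"
      using key[OF T.smul_c[OF h(1)]] by simp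
    also have "\<dots> = msmul (tilde (quot M G)) r (\<phi> A)"
      using key[OF h(1)] h Q.qsmul[OF hc[OF h(1)]] unfolding G_def by (simp add: tilde_sel)
    finally show "\<phi> (msmul (quot (tilde M) GT) r A) = msmul (tilde (quot M G)) r (\<phi> A)" .
  next
    fix A assume "A \<in> mcarrier (quot (tilde M) GT)"
    then obtain h where h: "h \<in> mcarrier (tilde M)" "A = coset (tilde M) GT h" by (auto simp: quot_sel)
    have "mx (quot (tilde M) GT) A = coset (tilde M) GT (mx (tilde M) h)"
      using QT.qx[OF h(1)] h unfolding GT_def by simp
    then have "\<phi> (mx (quot (tilde M) GT) A) = (\<lambda>n. coset M G (mx (tilde M) h n))"
      using key[OF T.x_c[OF h(1)]] by simp
    also have "\<dots> = mx (tilde (quot M G)) (\<phi> A)"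
    proof (rule ext)
      fix n show "coset M G (mx (tilde M) h n) = mx (tilde (quot M G)) (\<phi> A) n"
        using key[OF h(1)] h Q.qx[OF hc[OF h(1)]] Q.coset_zero unfolding G_def
        by (cases n) (simp_all add: tilde_sel quot_sel del: tilde_simps)
    qed
    finally show "\<phi> (mx (quot (tilde M) GT) A) = mx (tilde (quot M G)) (\<phi> A)" .
  qed
  then show ?thesis unfolding G_def GT_def by blast
qed

end

theorem lemma2p5:
  fixes p :: nat
    and H :: "('r::comm_ring_1, 'm) fmod"
  assumes "prime p"
    and "CHAR('r) = p"
    and "noetherian_ring TYPE('r)"
    and "fmodule p H"
  shows "gann_set p (tilde H) = gann_set p H
         \<and> (HSL (tilde H) = HSL H
              \<and> Gamma_x (tilde H) = mcarrier (tilde (H\<lparr>mcarrier := Gamma_x H\<rparr>)))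
         \<and> (\<exists>\<phi>. fmod_iso (quot (tilde H) (Gamma_x (tilde H)))
                    (tilde (quot H (Gamma_x H))) \<phi>)"
proof -
  interpret fm p H by (rule fm.intro, rule assms(4))
  have "Gamma_x (tilde H) = mcarrier (tilde (H\<lparr>mcarrier := Gamma_x H\<rparr>))"
    unfolding Gamma_tilde by (simp add: tilde_def)
  then show ?thesis using gann_tilde[OF assms(4)] HSL_tilde quot_iso by blast
qed

end
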